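(* For every level $t \in \mathcal{L}$ there exist finitely many levels $u_1, \ldots, u_n$, each generated by the grammar $u ::= x \mid 0 \mid s(u) \mid \operatorname{imax}(u, u)$ (with $x \in \mathcal{X}$, i.e. containing no $\max$), such that $t =_{\mathcal{L}} \max(u_1, \ldots, u_n)$.
   Context: $\operatorname{imax}\colon \mathbb{N}\times\mathbb{N}\to\mathbb{N}$ is defined by $\operatorname{imax}(i,0)=0$ and $\operatorname{imax}(i,j+1)=\max(i,j+1)$. Levels are the terms of the grammar $t ::= x \mid 0 \mid s(t) \mid \max(t,t) \mid \operatorname{imax}(t,t)$, where $x$ ranges over a countable set of variables $\mathcal{X}$; $\mathcal{L}$ denotes the set of levels. A valuation is a function $\sigma\colon\mathcal{X}\to\mathbb{N}$; the value $[t]_\sigma$ is defined by $[0]_\sigma=0$, $[x]_\sigma=\sigma(x)$, $[s(t)]_\sigma=[t]_\sigma+1$, $[\max(t_1,t_2)]_\sigma=\max([t_1]_\sigma,[t_2]_\sigma)$, $[\operatorname{imax}(t_1,t_2)]_\sigma=\operatorname{imax}([t_1]_\sigma,[t_2]_\sigma)$. $t_1 =_{\mathcal{L}} t_2$ means $[t_1]_\sigma=[t_2]_\sigma$ for every valuation $\sigma$. $\max(u_1,\ldots,u_n)$ denotes the $n$-ary maximum (its value is the maximum of the values). *)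

theory Defs
  imports Main
begin

definition imax :: "nat \<Rightarrow> nat \<Rightarrow> nat" where
  "imax i j = (if j = 0 then 0 else max i j)"

datatype level =
    Var nat
  | Zero
  | S level
  | LMax level level
  | IMax level level

primrec eval :: "(nat \<Rightarrow> nat) \<Rightarrow> level \<Rightarrow> nat" where
  "eval \<sigma> (Var x) = \<sigma> x"
| "eval \<sigma> Zero = 0"
| "eval \<sigma> (S t) = Suc (eval \<sigma> t)"
| "eval \<sigma> (LMax t1 t2) = max (eval \<sigma> t1) (eval \<sigma> t2)"
| "eval \<sigma> (IMax t1 t2) = imax (eval \<sigma> t1) (eval \<sigma> t2)"

primrec max_free :: "level \<Rightarrow> bool" where
  "max_free (Var x) = True"
| "max_free Zero = True"
| "max_free (S t) = max_free t"
| "max_free (LMax t1 t2) = False"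
| "max_free (IMax t1 t2) = (max_free t1 \<and> max_free t2)"

end

theory Submission
  imports Defs
begin

definition rep :: "level list \<Rightarrow> (nat \<Rightarrow> nat) \<Rightarrow> nat \<Rightarrow> bool" where
  "rep us \<sigma> v \<longleftrightarrow> (\<exists>u\<in>set us. eval \<sigma> u = v) \<and> (\<forall>u\<in>set us. eval \<sigma> u \<le> v)"

lemma rep_Max: "rep us \<sigma> v \<Longrightarrow> v = Max (eval \<sigma> ` set us)"
  unfolding rep_def by (intro Max_eqI[symmetric]) auto

lemma main: "\<exists>us. us \<noteq> [] \<and> (\<forall>u \<in> set us. max_free u) \<and> (\<forall>\<sigma>. rep us \<sigma> (eval \<sigma> t))"
proof (induction t)
  case (Var x)
  show ?case by (rule exI[of _ "[Var x]"]) (auto simp: rep_def)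
next
  case Zero
  show ?case by (rule exI[of _ "[Zero]"]) (auto simp: rep_def)
next
  case (S t)
  then obtain us where h: "us \<noteq> []" "\<forall>u \<in> set us. max_free u" "\<forall>\<sigma>. rep us \<sigma> (eval \<sigma> t)" by blast
  show ?case
    by (rule exI[of _ "map S us"]) (use h in \<open>fastforce simp: rep_def\<close>)
next
  case (LMax t1 t2)
  then obtain as bs where a: "as \<noteq> []" "\<forall>u \<in> set as. max_free u" "\<forall>\<sigma>. rep as \<sigma> (eval \<sigma> t1)"
    and b: "bs \<noteq> []" "\<forall>u \<in> set bs. max_free u" "\<forall>\<sigma>. rep bs \<sigma> (eval \<sigma> t2)" by blast
  show ?case
  proof (rule exI[of _ "as @ bs"], intro conjI allI)
    fix \<sigma>
    show "rep (as @ bs) \<sigma> (eval \<sigma> (LMax t1 t2))"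
      using a(3)[rule_format, of \<sigma>] b(3)[rule_format, of \<sigma>] unfolding rep_def
      by (auto simp: max_def)
  qed (use a b in auto)
next
  case (IMax t1 t2)
  then obtain as bs where a: "as \<noteq> []" "\<forall>u \<in> set as. max_free u" "\<forall>\<sigma>. rep as \<sigma> (eval \<sigma> t1)"
    and b: "bs \<noteq> []" "\<forall>u \<in> set bs. max_free u" "\<forall>\<sigma>. rep bs \<sigma> (eval \<sigma> t2)" by blast
  show ?case
  proof (rule exI[of _ "concat (map (\<lambda>x. map (IMax x) bs) as)"], intro conjI allI)
    fix \<sigma>
    obtain a0 where a0: "a0 \<in> set as" "eval \<sigma> a0 = eval \<sigma> t1" "\<forall>u\<in>set as. eval \<sigma> u \<le> eval \<sigma> t1"
      using a(3)[rule_format, of \<sigma>] unfolding rep_def by blast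
    obtain b0 where b0: "b0 \<in> set bs" "eval \<sigma> b0 = eval \<sigma> t2" "\<forall>u\<in>set bs. eval \<sigma> u \<le> eval \<sigma> t2"
      using b(3)[rule_format, of \<sigma>] unfolding rep_def by blast
    have w: "IMax a0 b0 \<in> set (concat (map (\<lambda>x. map (IMax x) bs) as))" using a0 b0 by auto
    show "rep (concat (map (\<lambda>x. map (IMax x) bs) as)) \<sigma> (eval \<sigma> (IMax t1 t2))"
      unfolding rep_def
    proof (intro conjI ballI)
      fix u assume "u \<in> set (concat (map (\<lambda>x. map (IMax x) bs) as))"
      then obtain x y where "x \<in> set as" "y \<in> set bs" "u = IMax x y" by auto
      then show "eval \<sigma> u \<le> eval \<sigma> (IMax t1 t2)"
        using a0 b0 by (fastforce simp: imax_def)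
    next
      show "\<exists>u\<in>set (concat (map (\<lambda>x. map (IMax x) bs) as)). eval \<sigma> u = eval \<sigma> (IMax t1 t2)"
        using w a0 b0 by (intro bexI[OF _ w]) (simp add: imax_def)
    qed
  qed (use a b in \<open>auto simp: neq_Nil_conv\<close>)
qed

theorem theorem13:
  fixes t :: level
  shows "\<exists>us :: level list. us \<noteq> [] \<and> (\<forall>u \<in> set us. max_free u) \<and>
           (\<forall>\<sigma>. eval \<sigma> t = Max (eval \<sigma> ` set us))"
  using main[of t] rep_Max by blast

end
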